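(* Let $t$ be a positive integer and let $M_1,M_2$ be matroids on a finite set $E$ such that $M_2$ is a quotient of $M_1$, and let $\rho=r_{M_1}+r_{M_2}$. Then $r(M_1)-r(M_2)\le t$ if and only if the polymatroid $\rho$ does not have the (rank function of the) uniform matroid $U_{t+1,t+1}$ as a minor.
   Context: A polymatroid on $E$ is a function $\rho:2^E\to\mathbb{Z}$ that is normalized, non-decreasing and submodular; matroid rank functions are polymatroids. For matroids $Q,L$ on $E$, $Q$ is a quotient of $L$ if there is a matroid $M$ and $A\subseteq E(M)$ with $L=M\backslash A$ and $Q=M/A$. Polymatroid minors: $\rho_{\backslash A}(X)=\rho(X)$, $\rho_{/A}(X)=\rho(X\cup A)-\rho(A)$ for $X\subseteq E-A$; minors are $(\rho_{\backslash A})_{/B}$ for disjoint $A,B\subseteq E$ (up to isomorphism). $U_{t+1,t+1}$ is the free matroid on $t+1$ elements, whose rank function is $X\mapsto|X|$. *)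

theory Defs
  imports Main
begin

definition polymatroid :: "'a set \<Rightarrow> ('a set \<Rightarrow> int) \<Rightarrow> bool" where
  "polymatroid E \<rho> \<longleftrightarrow> finite E \<and> \<rho> {} = 0 \<and>
     (\<forall>X Y. X \<subseteq> Y \<and> Y \<subseteq> E \<longrightarrow> \<rho> X \<le> \<rho> Y) \<and>
     (\<forall>X Y. X \<subseteq> E \<and> Y \<subseteq> E \<longrightarrow> \<rho> (X \<union> Y) + \<rho> (X \<inter> Y) \<le> \<rho> X + \<rho> Y)"

definition matroid :: "'a set \<Rightarrow> ('a set \<Rightarrow> int) \<Rightarrow> bool" where
  "matroid E r \<longleftrightarrow> polymatroid E r \<and> (\<forall>X \<subseteq> E. r X \<le> int (card X))"

definition pm_delete :: "('a set \<Rightarrow> int) \<Rightarrow> 'a set \<Rightarrow> ('a set \<Rightarrow> int)" where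
  "pm_delete \<rho> A = (\<lambda>X. \<rho> X)"

definition pm_contract :: "('a set \<Rightarrow> int) \<Rightarrow> 'a set \<Rightarrow> ('a set \<Rightarrow> int)" where
  "pm_contract \<rho> A = (\<lambda>X. \<rho> (X \<union> A) - \<rho> A)"

text \<open>Q (rank rQ) is a quotient of L (rank rL) on E: there is a matroid M on a
  ground set E \<union> A (A disjoint from E, realised as Inl ` E \<union> Inr ` A with A finite,
  which loses no generality up to relabelling) with L = M \ A and Q = M / A.\<close>
definition is_quotient :: "'a set \<Rightarrow> ('a set \<Rightarrow> int) \<Rightarrow> ('a set \<Rightarrow> int) \<Rightarrow> bool" where
  "is_quotient E rQ rL \<longleftrightarrow>
     (\<exists>(rM :: ('a + nat) set \<Rightarrow> int) A. finite A \<and> matroid (Inl ` E \<union> Inr ` A) rM \<and>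
        (\<forall>X \<subseteq> E. rL X = pm_delete rM (Inr ` A) (Inl ` X) \<and>
                   rQ X = pm_contract rM (Inr ` A) (Inl ` X)))"

definition has_minor :: "'a set \<Rightarrow> ('a set \<Rightarrow> int) \<Rightarrow> 'b set \<Rightarrow> ('b set \<Rightarrow> int) \<Rightarrow> bool" where
  "has_minor E \<rho> F \<sigma> \<longleftrightarrow>
     (\<exists>A B f. A \<subseteq> E \<and> B \<subseteq> E \<and> A \<inter> B = {} \<and> bij_betw f (E - A - B) F \<and>
        (\<forall>X \<subseteq> E - A - B. pm_contract (pm_delete \<rho> A) B X = \<sigma> (f ` X)))"

text \<open>Rank function of the free matroid U_{n,n}, on ground set {..<n}.\<close>
definition free_rank :: "nat set \<Rightarrow> int" where
  "free_rank X = int (card X)"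

end

theory Submission
  imports Defs
begin

lemma m_mono: "matroid E r \<Longrightarrow> X \<subseteq> Y \<Longrightarrow> Y \<subseteq> E \<Longrightarrow> r X \<le> r Y"
  unfolding matroid_def polymatroid_def by blast

lemma m_sub: "matroid E r \<Longrightarrow> X \<subseteq> E \<Longrightarrow> Y \<subseteq> E \<Longrightarrow> r (X \<union> Y) + r (X \<inter> Y) \<le> r X + r Y"
  unfolding matroid_def polymatroid_def by blast

lemma m_card: "matroid E r \<Longrightarrow> X \<subseteq> E \<Longrightarrow> r X \<le> int (card X)"
  unfolding matroid_def by blast

lemma m_empty: "matroid E r \<Longrightarrow> r {} = 0"
  unfolding matroid_def polymatroid_def by blast

lemma m_fin: "matroid E r \<Longrightarrow> finite E"
  unfolding matroid_def polymatroid_def by blast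

lemma m_nonneg: "matroid E r \<Longrightarrow> X \<subseteq> E \<Longrightarrow> 0 \<le> r X"
  using m_mono[of E r "{}" X] m_empty[of E r] by auto

lemma m_add_bound:
  assumes "matroid E r" "S \<subseteq> E" "Y \<subseteq> E"
  shows "r (S \<union> Y) \<le> r S + int (card Y)"
proof -
  have "r (S \<union> Y) + r (S \<inter> Y) \<le> r S + r Y" using m_sub assms by blast
  moreover have "0 \<le> r (S \<inter> Y)" using m_nonneg assms by blast
  moreover have "r Y \<le> int (card Y)" using m_card assms by blast
  ultimately show ?thesis by linarith
qed

lemma m_no_increase:
  assumes "matroid E r" "S \<subseteq> E" "\<forall>e\<in>E. r (insert e S) \<le> r S" "Y \<subseteq> E"
  shows "r (S \<union> Y) \<le> r S"
proof -
  have fin: "finite Y" using assms m_fin finite_subset by blast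
  show ?thesis using fin assms(4)
  proof (induction Y rule: finite_induct)
    case empty then show ?case by simp
  next
    case (insert e Y)
    have eE: "e \<in> E" using insert by auto
    have 1: "r ((S \<union> Y) \<union> insert e S) + r ((S \<union> Y) \<inter> insert e S) \<le> r (S \<union> Y) + r (insert e S)"
      using m_sub[OF assms(1), of "S \<union> Y" "insert e S"] insert assms eE by auto
    have 2: "r S \<le> r ((S \<union> Y) \<inter> insert e S)"
    proof -
      have "(S \<union> Y) \<inter> insert e S \<subseteq> E" using assms(2) eE by blast
      moreover have "S \<subseteq> (S \<union> Y) \<inter> insert e S" by blast
      ultimately show ?thesis using m_mono[OF assms(1)] by blast
    qed
    have 3: "(S \<union> Y) \<union> insert e S = S \<union> insert e Y" by auto
    have ih: "r (S \<union> Y) \<le> r S" using insert by auto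
    have h: "r (insert e S) \<le> r S" using assms(3) eE by blast
    have "r (S \<union> insert e Y) + r ((S \<union> Y) \<inter> insert e S) \<le> r (S \<union> Y) + r (insert e S)"
      using 1 unfolding 3 .
    then show ?case using 2 ih h by linarith
  qed
qed

lemma m_extend:
  assumes "matroid E r" "B \<subseteq> E"
  shows "int k \<le> r E - r B \<Longrightarrow> \<exists>Z. Z \<subseteq> E - B \<and> card Z = k \<and> r (B \<union> Z) = r B + int k"
proof (induction k)
  case 0 then show ?case by (intro exI[of _ "{}"]) auto
next
  case (Suc k)
  then obtain Z where Z: "Z \<subseteq> E - B" "card Z = k" "r (B \<union> Z) = r B + int k" by auto
  have fin: "finite E" using m_fin assms by blast
  have SE: "B \<union> Z \<subseteq> E" using Z assms by auto
  have "\<exists>e\<in>E. r (insert e (B \<union> Z)) > r (B \<union> Z)"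
  proof (rule ccontr)
    assume "\<not> ?thesis"
    then have "\<forall>e\<in>E. r (insert e (B \<union> Z)) \<le> r (B \<union> Z)" by auto
    then have "r ((B \<union> Z) \<union> E) \<le> r (B \<union> Z)" using m_no_increase[OF assms(1) SE] by blast
    moreover have "(B \<union> Z) \<union> E = E" using SE by auto
    ultimately show False using Suc.prems Z by auto
  qed
  then obtain e where e: "e \<in> E" "r (insert e (B \<union> Z)) > r (B \<union> Z)" by auto
  have eBZ: "e \<notin> B \<union> Z" using e by (metis insert_absorb less_irrefl)
  have up: "r (insert e (B \<union> Z)) \<le> r (B \<union> Z) + 1"
    using m_add_bound[OF assms(1) SE, of "{e}"] e by auto
  have finZ: "finite Z" using Z fin finite_subset by blast
  have c: "card (insert e Z) = Suc k" using Z(2) finZ eBZ by simp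
  have s: "insert e Z \<subseteq> E - B" using Z(1) e(1) eBZ by blast
  have u: "B \<union> insert e Z = insert e (B \<union> Z)" by blast
  have "r (B \<union> insert e Z) = r B + int (Suc k)" unfolding u using e(2) up Z(3) by linarith
  then show ?case using c s by blast
qed

lemma m_subset_indep:
  assumes "matroid E r" "B \<subseteq> E" "Z \<subseteq> E" "r (B \<union> Z) = r B + int (card Z)" "X \<subseteq> Z"
  shows "r (B \<union> X) = r B + int (card X)"
proof -
  have finZ: "finite Z" using assms m_fin finite_subset by blast
  have a: "r ((B \<union> X) \<union> (Z - X)) \<le> r (B \<union> X) + int (card (Z - X))"
    using m_add_bound[OF assms(1), of "B \<union> X" "Z - X"] assms by auto
  have b: "(B \<union> X) \<union> (Z - X) = B \<union> Z" using assms by auto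
  have c: "r (B \<union> X) \<le> r B + int (card X)"
    using m_add_bound[OF assms(1), of B X] assms by auto
  have d: "card Z = card X + card (Z - X)"
  proof -
    have "card (Z - X) = card Z - card X" using card_Diff_subset finZ assms(5) finite_subset by metis
    moreover have "card X \<le> card Z" using card_mono finZ assms(5) by metis
    ultimately show ?thesis by simp
  qed
  show ?thesis using a b c d assms(4) by auto
qed

lemma quot_ineq:
  assumes "is_quotient E r2 r1" "X \<subseteq> Y" "Y \<subseteq> E"
  shows "r2 Y - r2 X \<le> r1 Y - r1 X"
proof -
  obtain rM :: "('a + nat) set \<Rightarrow> int" and A where
    A: "finite A" "matroid (Inl ` E \<union> Inr ` A) rM"
    "\<forall>X \<subseteq> E. r1 X = pm_delete rM (Inr ` A) (Inl ` X) \<and>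
                   r2 X = pm_contract rM (Inr ` A) (Inl ` X)"
    using assms(1) unfolding is_quotient_def by blast
  have s: "rM (Inl ` Y \<union> (Inl ` X \<union> Inr ` A)) + rM (Inl ` Y \<inter> (Inl ` X \<union> Inr ` A))
      \<le> rM (Inl ` Y) + rM (Inl ` X \<union> Inr ` A)"
  proof -
    have "Inl ` Y \<subseteq> Inl ` E \<union> Inr ` A" using assms(3) by blast
    moreover have "Inl ` X \<union> Inr ` A \<subseteq> Inl ` E \<union> Inr ` A" using assms(2,3) by blast
    ultimately show ?thesis by (rule m_sub[OF A(2)])
  qed
  have u: "Inl ` Y \<union> (Inl ` X \<union> Inr ` A) = Inl ` Y \<union> Inr ` A" using assms by auto
  have i: "Inl ` Y \<inter> (Inl ` X \<union> Inr ` A) = Inl ` X" using assms by auto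
  have "r1 Y = rM (Inl ` Y)" "r1 X = rM (Inl ` X)"
    "r2 Y = rM (Inl ` Y \<union> Inr ` A) - rM (Inr ` A)" "r2 X = rM (Inl ` X \<union> Inr ` A) - rM (Inr ` A)"
    using A(3) assms unfolding pm_delete_def pm_contract_def by auto
  moreover have "rM (Inl ` Y \<union> Inr ` A) + rM (Inl ` X) \<le> rM (Inl ` Y) + rM (Inl ` X \<union> Inr ` A)"
    using s unfolding u i .
  ultimately show ?thesis by linarith
qed

theorem theorem5p4:
  fixes t :: nat and E :: "'a set" and r1 r2 :: "'a set \<Rightarrow> int"
  assumes "0 < t"
    and "finite E"
    and "matroid E r1" and "matroid E r2"
    and "is_quotient E r2 r1"
  shows "r1 E - r2 E \<le> int t \<longleftrightarrow>
         \<not> has_minor E (\<lambda>X. r1 X + r2 X) {..<t+1} free_rank"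
proof
  assume H: "r1 E - r2 E \<le> int t"
  show "\<not> has_minor E (\<lambda>X. r1 X + r2 X) {..<t+1} free_rank"
  proof
    assume "has_minor E (\<lambda>X. r1 X + r2 X) {..<t+1} free_rank"
    then obtain A B f where AB: "A \<subseteq> E" "B \<subseteq> E" "A \<inter> B = {}" "bij_betw f (E - A - B) {..<t+1}"
      "\<forall>X \<subseteq> E - A - B. pm_contract (pm_delete (\<lambda>X. r1 X + r2 X) A) B X = free_rank (f ` X)"
      unfolding has_minor_def by (elim exE conjE) (rule that; assumption)
    define Z where "Z = E - A - B"
    have eq: "X \<subseteq> Z \<Longrightarrow> r1 (X \<union> B) + r2 (X \<union> B) - (r1 B + r2 B) = int (card X)" for X
    proof -
      assume X: "X \<subseteq> Z"
      have "inj_on f X" using AB(4) X unfolding Z_def bij_betw_def by (metis inj_on_subset)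
      then have "card (f ` X) = card X" by (rule card_image)
      moreover have "X \<subseteq> E - A - B" using X unfolding Z_def .
      then have "pm_contract (pm_delete (\<lambda>X. r1 X + r2 X) A) B X = free_rank (f ` X)" using AB(5) by blast
      ultimately show ?thesis unfolding pm_contract_def pm_delete_def free_rank_def by simp
    qed
    have finZ: "finite Z" using assms(2) Z_def by auto
    have ZE: "Z \<subseteq> E" using Z_def by auto
    have r2c: "X \<subseteq> Z \<Longrightarrow> r2 (X \<union> B) = r2 B" for X
    proof -
      assume X: "X \<subseteq> Z"
      have fX: "finite X" using X finZ finite_subset by blast
      show ?thesis using fX X
      proof (induction X rule: finite_induct)
        case empty then show ?case by simp
      next
        case (insert e X)
        have XBE: "X \<union> B \<subseteq> E" "insert e X \<union> B \<subseteq> E" using insert ZE AB by auto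
        have e1: "r1 (insert e X \<union> B) + r2 (insert e X \<union> B) - (r1 B + r2 B) = int (card X) + 1"
          using eq[of "insert e X"] insert by auto
        have e2: "r1 (X \<union> B) + r2 (X \<union> B) - (r1 B + r2 B) = int (card X)"
          using eq[of X] insert by auto
        have q: "r2 (insert e X \<union> B) - r2 (X \<union> B) \<le> r1 (insert e X \<union> B) - r1 (X \<union> B)"
          using quot_ineq[OF assms(5), of "X \<union> B" "insert e X \<union> B"] XBE by auto
        have m: "r2 (X \<union> B) \<le> r2 (insert e X \<union> B)"
          using m_mono[OF assms(4), of "X \<union> B" "insert e X \<union> B"] XBE by auto
        have ih: "r2 (X \<union> B) = r2 B" using insert by auto
        show ?case using e1 e2 q m ih by linarith
      qed
    qed
    have cZ: "card Z = t + 1" using bij_betw_same_card[OF AB(4)] unfolding Z_def by simp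
    have a: "r1 (Z \<union> B) - r2 (Z \<union> B) = r1 B - r2 B + int (t + 1)"
      using eq[of Z] r2c[of Z] cZ by auto
    have b: "r2 E - r2 (Z \<union> B) \<le> r1 E - r1 (Z \<union> B)"
      using quot_ineq[OF assms(5), of "Z \<union> B" E] ZE AB by auto
    have c: "r2 B - r2 {} \<le> r1 B - r1 {}"
      using quot_ineq[OF assms(5), of "{}" B] AB by auto
    have d: "r1 {} = 0" "r2 {} = 0" using m_empty assms by auto
    show False using H a b c d by linarith
  qed
next
  assume H: "\<not> has_minor E (\<lambda>X. r1 X + r2 X) {..<t+1} free_rank"
  show "r1 E - r2 E \<le> int t"
  proof (rule ccontr)
    assume C: "\<not> ?thesis"
    have r2E: "0 \<le> r2 E" using m_nonneg[OF assms(4)] by auto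
    have "int (nat (r2 E)) \<le> r2 E - r2 {}" using m_empty[OF assms(4)] r2E by auto
    then obtain B where B: "B \<subseteq> E - {}" "card B = nat (r2 E)" "r2 ({} \<union> B) = r2 {} + int (nat (r2 E))"
      using m_extend[OF assms(4), of "{}"] by blast
    have BE: "B \<subseteq> E" using B by auto
    have r2B: "r2 B = r2 E" using B r2E m_empty[OF assms(4)] by auto
    have r1B: "r1 B \<le> r2 E" using m_card[OF assms(3) BE] B r2E by auto
    have "int (t+1) \<le> r1 E - r1 B" using C r1B by auto
    then obtain Z where Z: "Z \<subseteq> E - B" "card Z = t+1" "r1 (B \<union> Z) = r1 B + int (t+1)"
      using m_extend[OF assms(3) BE] by blast
    have ZE: "Z \<subseteq> E" using Z by auto
    have finZ: "finite Z" using ZE assms(2) finite_subset by blast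
    obtain f where f: "bij_betw f Z {..<t+1}"
      using finite_same_card_bij[OF finZ, of "{..<t+1}"] Z by auto
    have ZZ: "E - (E - B - Z) - B = Z" using Z by auto
    have P: "\<forall>X \<subseteq> E - (E - B - Z) - B. pm_contract (pm_delete (\<lambda>X. r1 X + r2 X) (E - B - Z)) B X = free_rank (f ` X)"
    proof (intro allI impI)
      fix X assume X: "X \<subseteq> E - (E - B - Z) - B"
      then have XZ: "X \<subseteq> Z" using ZZ by simp
      have i1: "r1 (B \<union> X) = r1 B + int (card X)"
        using m_subset_indep[OF assms(3) BE ZE _ XZ] Z by auto
      have m1: "r2 (B \<union> X) \<le> r2 E" using m_mono[OF assms(4), of "B \<union> X" E] XZ ZE BE by auto
      have m2: "r2 B \<le> r2 (B \<union> X)" using m_mono[OF assms(4), of B "B \<union> X"] XZ ZE BE by auto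
      have inj: "inj_on f X" using f XZ unfolding bij_betw_def by (metis inj_on_subset)
      have "X \<union> B = B \<union> X" by auto
      then show "pm_contract (pm_delete (\<lambda>X. r1 X + r2 X) (E - B - Z)) B X = free_rank (f ` X)"
        unfolding pm_contract_def pm_delete_def free_rank_def
        using i1 m1 m2 r2B card_image[OF inj] by simp
    qed
    have bj: "bij_betw f (E - (E - B - Z) - B) {..<t+1}" using ZZ f by simp
    have s1: "E - B - Z \<subseteq> E" "(E - B - Z) \<inter> B = {}" by auto
    have "has_minor E (\<lambda>X. r1 X + r2 X) {..<t+1} free_rank"
      unfolding has_minor_def using s1 BE bj P by blast
    then show False using H by blast
  qed
qed

end
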